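(* Consider any execution of the reliable broadcast algorithm described in the context, with $n$ processes of which at most $f$ are Byzantine. At every point of the execution the following hold, where $\langle x\rangle_p$ denotes $x$ signed by $p$: (I1) If $\langle\langle ts,v\rangle_i,\sigma\rangle$, with $\sigma$ a set of $f+1$ signatures (of distinct processes) on $\langle ready,\langle ts,v\rangle_i\rangle$, appears in $deliver_j$ for some processes $i,j$, then $\langle ready,\langle ts,v\rangle_i\rangle_k\in ready_k$ for some correct process $k$. (I2) If $\langle ready,\langle ts,v\rangle_i\rangle_j\in ready_j$ for a correct process $j$, then $\langle ts,v\rangle_i\in echo_j$. (I3) If $\langle ready,\langle ts,v\rangle_i\rangle_j\in ready_j$ and $\langle ready,\langle ts,w\rangle_i\rangle_{j'}\in ready_{j'}$ for correct processes $j,j'$, then $v=w$. (I4) If $\langle\langle ts,v\rangle_i,\sigma\rangle\in deliver_j$ and $\langle\langle ts,w\rangle_i,\sigma'\rangle\in deliver_{j'}$ (with $\sigma,\sigma'$ sets of $f+1$ ready signatures as in (I1)) for correct processes $j,j'$, then $v=w$.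
   Context: Model: processes $\Pi=\{1,\dots,n\}$, asynchronous, communicating through reliable single-writer multi-reader (SWMR) registers. Up to $f$ processes are Byzantine (arbitrary behavior, may write arbitrary values to their own registers); correct processes follow the algorithm. PKI: $\langle x\rangle_p$ denotes $x$ signed by $p$, and signatures are unforgeable. Algorithm (code for process $i$): $i$ owns SWMR registers $send_i$, $echo_i$, $ready_i$, $deliver_i$ (the last three hold sets, initially empty; a correct process only adds elements to them). conflicting-echo$(\langle ts,v\rangle_j)$: reads all echo registers and returns true iff there exist $w\neq v$ and $k\in\Pi$ with $\langle ts,w\rangle_j\in echo_k$. broadcast$(ts,val)$: write $send_i\gets\langle ts,val\rangle_i$; then repeatedly call deliver$(i,ts)$ until it returns a value $\neq\bot$, and return. deliver$(j,ts)$: call refresh(); if there exist $k\in\Pi$ and $v$ such that $\langle\langle ts,v\rangle_j,\sigma\rangle\in deliver_k$ where $\sigma$ is a set of $f+1$ signatures of distinct processes on $\langle ready,\langle ts,v\rangle_j\rangle$, then add $\langle\langle ts,v\rangle_j,\sigma\rangle$ to $deliver_i$ and return $v$; otherwise return $\bot$. refresh(): for each $j\in[n]$: read $m\gets send_j$; if $m$ is not of the form $\langle ts,val\rangle_j$, skip to the next $j$; add $m$ (signed by $i$) to $echo_i$; if not conflicting-echo$(m)$, add $\langle ready,m\rangle_i$ to $ready_i$; if there is a set $S\subseteq\Pi$ with $|S|\geq f+1$ such that $\langle ready,m\rangle_l\in ready_l$ for all $l\in S$, and not conflicting-echo$(m)$ (re-reading all echo registers), then add $\langle m,\{\langle ready,m\rangle_l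 : l\in S\}\rangle$ to $deliver_i$. *)

theory Defs
  imports Main "HOL-Library.FSet"
begin

(* Processes are natural numbers; the process set is Pi = {1..n}. *)

(* MData ts v            : the pair <ts,v>
   MReady m              : the pair <ready, m>
   MSig p m              : <m>_p, the message m signed by process p
   MDeliv m sigma        : the pair <m, sigma> (sigma a finite set of messages) *)
datatype ('t,'v) msg =
    MData 't 'v
  | MReady "('t,'v) msg"
  | MSig nat "('t,'v) msg"
  | MDeliv "('t,'v) msg" "('t,'v) msg fset"

inductive_set parts :: "('t,'v) msg set \<Rightarrow> ('t,'v) msg set" for H where
  inj: "x \<in> H \<Longrightarrow> x \<in> parts H"
| rdy: "MReady x \<in> parts H \<Longrightarrow> x \<in> parts H"
| sig: "MSig p x \<in> parts H \<Longrightarrow> x \<in> parts H"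
| dl1: "MDeliv x \<sigma> \<in> parts H \<Longrightarrow> x \<in> parts H"
| dl2: "MDeliv x \<sigma> \<in> parts H \<Longrightarrow> y |\<in>| \<sigma> \<Longrightarrow> y \<in> parts H"

definition is_cert :: "nat \<Rightarrow> nat \<Rightarrow> ('t,'v) msg \<Rightarrow> ('t,'v) msg fset \<Rightarrow> bool" where
  "is_cert n f m \<sigma> \<longleftrightarrow>
     (\<exists>S. fset S \<subseteq> {1..n} \<and> f + 1 \<le> fcard S \<and> \<sigma> = (\<lambda>l. MSig l (MReady m)) |`| S)"

definition valid_entry :: "nat \<Rightarrow> nat \<Rightarrow> nat \<Rightarrow> 't \<Rightarrow> ('t,'v) msg \<Rightarrow> bool" where
  "valid_entry n f j ts e \<longleftrightarrow>
     (\<exists>v \<sigma>. e = MDeliv (MSig j (MData ts v)) \<sigma> \<and> is_cert n f (MSig j (MData ts v)) \<sigma>)"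

(* the test performed on the echo register of process k (read by conflicting-echo
   for the message <ts,v>_j): there is w \<noteq> v with <<ts,w>_j>_k in echo_k *)
definition conflict_in :: "('t,'v) msg set \<Rightarrow> nat \<Rightarrow> nat \<Rightarrow> 't \<Rightarrow> 'v \<Rightarrow> bool" where
  "conflict_in E k j ts v \<longleftrightarrow> (\<exists>w. w \<noteq> v \<and> MSig k (MSig j (MData ts w)) \<in> E)"

(* Every step of a correct process performs at most one register access.
   Loop indices range over 1..n; an index > n means the loop is finished. *)
datatype ('t,'v) pcv =
    Idle
  | BcWrite 't 'v                               \<comment> \<open>broadcast: next write send_i\<close>
  | RRdSend nat                                 \<comment> \<open>refresh: next read send_j\<close>
  | RWrEcho nat 't 'v                           \<comment> \<open>refresh: add <m>_i to echo_i\<close>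
  | RChk1 nat 't 'v nat bool                    \<comment> \<open>1st conflicting-echo: next read echo_k, result so far\<close>
  | RWrReady nat 't 'v                          \<comment> \<open>add <ready,m>_i to ready_i\<close>
  | RRdReady nat 't 'v nat "nat fset"           \<comment> \<open>next read ready_l, set S so far\<close>
  | RChk2 nat 't 'v "nat fset" nat bool         \<comment> \<open>2nd conflicting-echo (re-reading)\<close>
  | RWrDeliv nat 't 'v "nat fset"               \<comment> \<open>add <m, sigma> to deliver_i\<close>
  | DRd nat                                     \<comment> \<open>deliver: next read deliver_k\<close>
  | DWr "('t,'v) msg"                           \<comment> \<open>deliver: add found entry to deliver_i\<close>

(* lj, lts: arguments (j,ts) of the current deliver invocation;
   lbc: whether that invocation was issued by broadcast (which loops) *)
record ('t,'v) lstate =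
  lpc :: "('t,'v) pcv"
  lj :: nat
  lts :: 't
  lbc :: bool

(* registers, local states, and a ghost component histS collecting every
   message ever written to any register (used to express unforgeability) *)
record ('t,'v) gstate =
  sendR  :: "nat \<Rightarrow> ('t,'v) msg option"
  echoR  :: "nat \<Rightarrow> ('t,'v) msg set"
  readyR :: "nat \<Rightarrow> ('t,'v) msg set"
  delivR :: "nat \<Rightarrow> ('t,'v) msg set"
  locS   :: "nat \<Rightarrow> ('t,'v) lstate"
  histS  :: "('t,'v) msg set"

definition setloc :: "nat \<Rightarrow> ('t,'v) lstate \<Rightarrow> ('t,'v) gstate \<Rightarrow> ('t,'v) gstate" where
  "setloc i l s = s\<lparr>locS := (locS s)(i := l)\<rparr>"

definition init_state :: "('t,'v) gstate \<Rightarrow> bool" where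
  "init_state s \<longleftrightarrow> sendR s = (\<lambda>_. None) \<and> echoR s = (\<lambda>_. {}) \<and> readyR s = (\<lambda>_. {})
     \<and> delivR s = (\<lambda>_. {}) \<and> (\<forall>i. lpc (locS s i) = Idle) \<and> histS s = {}"

inductive cstep :: "nat \<Rightarrow> nat \<Rightarrow> nat \<Rightarrow> ('t,'v) gstate \<Rightarrow> ('t,'v) gstate \<Rightarrow> bool"
  for n f :: nat where
  start_bcast:
    "lpc (locS s i) = Idle \<Longrightarrow>
     cstep n f i s (setloc i ((locS s i)\<lparr>lpc := BcWrite ts v\<rparr>) s)"
| start_deliver:
    "lpc (locS s i) = Idle \<Longrightarrow>
     cstep n f i s (setloc i ((locS s i)\<lparr>lpc := RRdSend 1, lj := j, lts := ts, lbc := False\<rparr>) s)"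
| bc_write:
    "lpc (locS s i) = BcWrite ts v \<Longrightarrow>
     cstep n f i s (setloc i ((locS s i)\<lparr>lpc := RRdSend 1, lj := i, lts := ts, lbc := True\<rparr>)
       (s\<lparr>sendR := (sendR s)(i := Some (MSig i (MData ts v))),
          histS := insert (MSig i (MData ts v)) (histS s)\<rparr>))"
| rd_send_ok:
    "lpc (locS s i) = RRdSend j \<Longrightarrow> j \<le> n \<Longrightarrow> sendR s j = Some (MSig j (MData ts v)) \<Longrightarrow>
     cstep n f i s (setloc i ((locS s i)\<lparr>lpc := RWrEcho j ts v\<rparr>) s)"
| rd_send_skip:
    "lpc (locS s i) = RRdSend j \<Longrightarrow> j \<le> n \<Longrightarrow>
     \<not> (\<exists>ts v. sendR s j = Some (MSig j (MData ts v))) \<Longrightarrow>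
     cstep n f i s (setloc i ((locS s i)\<lparr>lpc := RRdSend (Suc j)\<rparr>) s)"
| rd_send_end:
    "lpc (locS s i) = RRdSend j \<Longrightarrow> n < j \<Longrightarrow>
     cstep n f i s (setloc i ((locS s i)\<lparr>lpc := DRd 1\<rparr>) s)"
| wr_echo:
    "lpc (locS s i) = RWrEcho j ts v \<Longrightarrow>
     cstep n f i s (setloc i ((locS s i)\<lparr>lpc := RChk1 j ts v 1 False\<rparr>)
       (s\<lparr>echoR := (echoR s)(i := insert (MSig i (MSig j (MData ts v))) (echoR s i)),
          histS := insert (MSig i (MSig j (MData ts v))) (histS s)\<rparr>))"
| chk1_rd:
    "lpc (locS s i) = RChk1 j ts v k c \<Longrightarrow> k \<le> n \<Longrightarrow>
     cstep n f i s (setloc i ((locS s i)\<lparr>lpc :=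
        RChk1 j ts v (Suc k) (c \<or> conflict_in (echoR s k) k j ts v)\<rparr>) s)"
| chk1_end_ok:
    "lpc (locS s i) = RChk1 j ts v k False \<Longrightarrow> n < k \<Longrightarrow>
     cstep n f i s (setloc i ((locS s i)\<lparr>lpc := RWrReady j ts v\<rparr>) s)"
| chk1_end_conf:
    "lpc (locS s i) = RChk1 j ts v k True \<Longrightarrow> n < k \<Longrightarrow>
     cstep n f i s (setloc i ((locS s i)\<lparr>lpc := RRdReady j ts v 1 {||}\<rparr>) s)"
| wr_ready:
    "lpc (locS s i) = RWrReady j ts v \<Longrightarrow>
     cstep n f i s (setloc i ((locS s i)\<lparr>lpc := RRdReady j ts v 1 {||}\<rparr>)
       (s\<lparr>readyR := (readyR s)(i := insert (MSig i (MReady (MSig j (MData ts v)))) (readyR s i)),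
          histS := insert (MSig i (MReady (MSig j (MData ts v)))) (histS s)\<rparr>))"
| rdready_rd:
    "lpc (locS s i) = RRdReady j ts v l S \<Longrightarrow> l \<le> n \<Longrightarrow>
     cstep n f i s (setloc i ((locS s i)\<lparr>lpc := RRdReady j ts v (Suc l)
        (if MSig l (MReady (MSig j (MData ts v))) \<in> readyR s l then finsert l S else S)\<rparr>) s)"
| rdready_end_ok:
    "lpc (locS s i) = RRdReady j ts v l S \<Longrightarrow> n < l \<Longrightarrow> f + 1 \<le> fcard S \<Longrightarrow>
     cstep n f i s (setloc i ((locS s i)\<lparr>lpc := RChk2 j ts v S 1 False\<rparr>) s)"
| rdready_end_no:
    "lpc (locS s i) = RRdReady j ts v l S \<Longrightarrow> n < l \<Longrightarrow> fcard S < f + 1 \<Longrightarrow>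
     cstep n f i s (setloc i ((locS s i)\<lparr>lpc := RRdSend (Suc j)\<rparr>) s)"
| chk2_rd:
    "lpc (locS s i) = RChk2 j ts v S k c \<Longrightarrow> k \<le> n \<Longrightarrow>
     cstep n f i s (setloc i ((locS s i)\<lparr>lpc :=
        RChk2 j ts v S (Suc k) (c \<or> conflict_in (echoR s k) k j ts v)\<rparr>) s)"
| chk2_end_ok:
    "lpc (locS s i) = RChk2 j ts v S k False \<Longrightarrow> n < k \<Longrightarrow>
     cstep n f i s (setloc i ((locS s i)\<lparr>lpc := RWrDeliv j ts v S\<rparr>) s)"
| chk2_end_conf:
    "lpc (locS s i) = RChk2 j ts v S k True \<Longrightarrow> n < k \<Longrightarrow>
     cstep n f i s (setloc i ((locS s i)\<lparr>lpc := RRdSend (Suc j)\<rparr>) s)"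
| wr_deliv:
    "lpc (locS s i) = RWrDeliv j ts v S \<Longrightarrow>
     e = MDeliv (MSig j (MData ts v)) ((\<lambda>l. MSig l (MReady (MSig j (MData ts v)))) |`| S) \<Longrightarrow>
     cstep n f i s (setloc i ((locS s i)\<lparr>lpc := RRdSend (Suc j)\<rparr>)
       (s\<lparr>delivR := (delivR s)(i := insert e (delivR s i)),
          histS := insert e (histS s)\<rparr>))"
| drd_found:
    "lpc (locS s i) = DRd k \<Longrightarrow> k \<le> n \<Longrightarrow> e \<in> delivR s k \<Longrightarrow>
     valid_entry n f (lj (locS s i)) (lts (locS s i)) e \<Longrightarrow>
     cstep n f i s (setloc i ((locS s i)\<lparr>lpc := DWr e\<rparr>) s)"
| drd_skip:
    "lpc (locS s i) = DRd k \<Longrightarrow> k \<le> n \<Longrightarrow>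
     \<not> (\<exists>e \<in> delivR s k. valid_entry n f (lj (locS s i)) (lts (locS s i)) e) \<Longrightarrow>
     cstep n f i s (setloc i ((locS s i)\<lparr>lpc := DRd (Suc k)\<rparr>) s)"
| drd_end_bc:   \<comment> \<open>deliver returned bottom inside broadcast: call deliver(i,ts) again\<close>
    "lpc (locS s i) = DRd k \<Longrightarrow> n < k \<Longrightarrow> lbc (locS s i) \<Longrightarrow>
     cstep n f i s (setloc i ((locS s i)\<lparr>lpc := RRdSend 1\<rparr>) s)"
| drd_end_top:  \<comment> \<open>deliver returned bottom to the application\<close>
    "lpc (locS s i) = DRd k \<Longrightarrow> n < k \<Longrightarrow> \<not> lbc (locS s i) \<Longrightarrow>
     cstep n f i s (setloc i ((locS s i)\<lparr>lpc := Idle\<rparr>) s)"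
| dwr:          \<comment> \<open>deliver returns a value (and broadcast, if any, returns)\<close>
    "lpc (locS s i) = DWr e \<Longrightarrow>
     cstep n f i s (setloc i ((locS s i)\<lparr>lpc := Idle\<rparr>)
       (s\<lparr>delivR := (delivR s)(i := insert e (delivR s i)),
          histS := insert e (histS s)\<rparr>))"

(* Unforgeability: every signature of a non-Byzantine process occurring in a
   value written by a Byzantine process already occurs in some message that was
   previously written to some register. *)
definition forge_free :: "nat set \<Rightarrow> ('t,'v) gstate \<Rightarrow> ('t,'v) msg set \<Rightarrow> bool" where
  "forge_free B s X \<longleftrightarrow>
     (\<forall>p y. MSig p y \<in> parts X \<longrightarrow> p \<notin> B \<longrightarrow> MSig p y \<in> parts (histS s))"

inductive bstep :: "nat set \<Rightarrow> nat \<Rightarrow> ('t,'v) gstate \<Rightarrow> ('t,'v) gstate \<Rightarrow> bool"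
  for B :: "nat set" where
  b_send: "forge_free B s (set_option x) \<Longrightarrow>
     bstep B b s (s\<lparr>sendR := (sendR s)(b := x), histS := histS s \<union> set_option x\<rparr>)"
| b_echo: "forge_free B s X \<Longrightarrow>
     bstep B b s (s\<lparr>echoR := (echoR s)(b := X), histS := histS s \<union> X\<rparr>)"
| b_ready: "forge_free B s X \<Longrightarrow>
     bstep B b s (s\<lparr>readyR := (readyR s)(b := X), histS := histS s \<union> X\<rparr>)"
| b_deliv: "forge_free B s X \<Longrightarrow>
     bstep B b s (s\<lparr>delivR := (delivR s)(b := X), histS := histS s \<union> X\<rparr>)"

definition step :: "nat \<Rightarrow> nat \<Rightarrow> nat set \<Rightarrow> ('t,'v) gstate \<Rightarrow> ('t,'v) gstate \<Rightarrow> bool" where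
  "step n f B s s' \<longleftrightarrow>
     (\<exists>i \<in> {1..n} - B. cstep n f i s s') \<or> (\<exists>b \<in> B. bstep B b s s')"

inductive reach :: "nat \<Rightarrow> nat \<Rightarrow> nat set \<Rightarrow> ('t,'v) gstate \<Rightarrow> bool"
  for n f :: nat and B :: "nat set" where
  init: "init_state s \<Longrightarrow> reach n f B s"
| stp: "reach n f B s \<Longrightarrow> step n f B s s' \<Longrightarrow> reach n f B s'"

end

theory Submission
  imports Defs
begin


lemma parts_trans: "y \<in> parts {x} \<Longrightarrow> x \<in> parts H \<Longrightarrow> y \<in> parts H"
  by (induction y rule: parts.induct) (auto intro: parts.intros)

lemma parts_mono: "y \<in> parts G \<Longrightarrow> G \<subseteq> H \<Longrightarrow> y \<in> parts H"
  by (induction y rule: parts.induct) (auto intro: parts.intros)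

lemma parts_Un: "parts (G \<union> H) = parts G \<union> parts H"
proof
  show "parts (G \<union> H) \<subseteq> parts G \<union> parts H"
  proof
    fix y assume "y \<in> parts (G \<union> H)" then show "y \<in> parts G \<union> parts H"
      by (induction y rule: parts.induct) (auto intro: parts.intros)
  qed
  show "parts G \<union> parts H \<subseteq> parts (G \<union> H)" by (auto elim: parts_mono)
qed

lemma parts_insert: "H \<noteq> {} \<Longrightarrow> parts (insert x H) = parts {x} \<union> parts H"
  using parts_Un[of "{x}" H] by simp

lemma parts_empty[simp]: "parts {} = {}"
proof -
  { fix y assume "y \<in> parts {}" then have False by (induction y rule: parts.induct) auto }
  then show ?thesis by auto
qed

lemma parts_MData[simp]: "parts {MData ts v} = {MData ts v}"
proof -
  { fix y assume "y \<in> parts {MData ts v}" then have "y = MData ts v"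
      by (induction y rule: parts.induct) auto }
  then show ?thesis by (auto intro: parts.intros)
qed

lemma parts_MSig[simp]: "parts {MSig p x} = insert (MSig p x) (parts {x})"
proof -
  { fix y assume "y \<in> parts {MSig p x}" then have "y = MSig p x \<or> y \<in> parts {x}"
      by (induction y rule: parts.induct) (auto intro: parts.intros) }
  moreover have "MSig p x \<in> parts {MSig p x}" by (auto intro: parts.intros)
  moreover have "x \<in> parts {MSig p x}" by (auto intro: parts.intros)
  ultimately show ?thesis by (auto intro: parts_trans)
qed

lemma parts_MReady[simp]: "parts {MReady x} = insert (MReady x) (parts {x})"
proof -
  { fix y assume "y \<in> parts {MReady x}" then have "y = MReady x \<or> y \<in> parts {x}"
      by (induction y rule: parts.induct) (auto intro: parts.intros) }
  moreover have "MReady x \<in> parts {MReady x}" by (auto intro: parts.intros)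
  moreover have "x \<in> parts {MReady x}" by (auto intro: parts.intros)
  ultimately show ?thesis by (auto intro: parts_trans)
qed

lemma parts_MDeliv[simp]: "parts {MDeliv x \<sigma>} = insert (MDeliv x \<sigma>) (parts {x} \<union> (\<Union>y\<in>fset \<sigma>. parts {y}))"
proof -
  { fix y assume "y \<in> parts {MDeliv x \<sigma>}" then have "y = MDeliv x \<sigma> \<or> y \<in> parts {x} \<or> (\<exists>z. z |\<in>| \<sigma> \<and> y \<in> parts {z})"
      by (induction y rule: parts.induct) (auto intro: parts.intros) }
  moreover have d: "MDeliv x \<sigma> \<in> parts {MDeliv x \<sigma>}" by (auto intro: parts.intros)
  moreover have "x \<in> parts {MDeliv x \<sigma>}" by (auto intro: parts.intros)
  moreover have "\<And>z. z |\<in>| \<sigma> \<Longrightarrow> z \<in> parts {MDeliv x \<sigma>}" using d by (auto intro: parts.dl2)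
  ultimately show ?thesis by (auto intro: parts_trans)
qed


definition E :: "('t,'v) gstate \<Rightarrow> nat \<Rightarrow> nat \<Rightarrow> 't \<Rightarrow> 'v \<Rightarrow> bool" where
  "E s p j ts v \<longleftrightarrow> MSig p (MSig j (MData ts v)) \<in> echoR s p"
definition Rdy :: "('t,'v) gstate \<Rightarrow> nat \<Rightarrow> nat \<Rightarrow> 't \<Rightarrow> 'v \<Rightarrow> bool" where
  "Rdy s p j ts v \<longleftrightarrow> MSig p (MReady (MSig j (MData ts v))) \<in> readyR s p"
definition PP :: "('t,'v) gstate \<Rightarrow> nat \<Rightarrow> nat \<Rightarrow> 't \<Rightarrow> 'v \<Rightarrow> nat \<Rightarrow> bool" where
  "PP s p j ts v q \<longleftrightarrow> Rdy s p j ts v \<or> lpc (locS s p) = RWrReady j ts v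
     \<or> (\<exists>k. lpc (locS s p) = RChk1 j ts v k False \<and> q < k)"

fun sset :: "('t,'v) pcv \<Rightarrow> (nat \<times> 't \<times> 'v \<times> nat fset) option" where
  "sset (RRdReady j ts v l S) = Some (j,ts,v,S)"
| "sset (RChk2 j ts v S k c) = Some (j,ts,v,S)"
| "sset (RWrDeliv j ts v S) = Some (j,ts,v,S)"
| "sset _ = None"

fun echk :: "('t,'v) pcv \<Rightarrow> (nat \<times> 't \<times> 'v) option" where
  "echk (RChk1 j ts v k c) = Some (j,ts,v)"
| "echk (RWrReady j ts v) = Some (j,ts,v)"
| "echk _ = None"

definition J1 :: "('t,'v) gstate \<Rightarrow> bool" where
  "J1 s \<longleftrightarrow> (\<forall>k. delivR s k \<subseteq> histS s)"
definition J2 :: "nat set \<Rightarrow> ('t,'v) gstate \<Rightarrow> bool" where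
  "J2 B s \<longleftrightarrow> (\<forall>k y. k \<notin> B \<longrightarrow> MSig k (MReady y) \<in> parts (histS s) \<longrightarrow> MSig k (MReady y) \<in> readyR s k)"
definition J3 :: "nat set \<Rightarrow> ('t,'v) gstate \<Rightarrow> bool" where
  "J3 B s \<longleftrightarrow> (\<forall>i j ts v S. i \<notin> B \<longrightarrow> sset (lpc (locS s i)) = Some (j,ts,v,S) \<longrightarrow> (\<forall>x. x |\<in>| S \<longrightarrow> x \<notin> B \<longrightarrow> Rdy s x j ts v))"
definition J4 :: "nat set \<Rightarrow> ('t,'v) gstate \<Rightarrow> bool" where
  "J4 B s \<longleftrightarrow> (\<forall>i e. i \<notin> B \<longrightarrow> lpc (locS s i) = DWr e \<longrightarrow> e \<in> histS s)"
definition J5 :: "nat set \<Rightarrow> ('t,'v) gstate \<Rightarrow> bool" where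
  "J5 B s \<longleftrightarrow> (\<forall>i j ts v. i \<notin> B \<longrightarrow>
       (echk (lpc (locS s i)) = Some (j,ts,v) \<or> Rdy s i j ts v) \<longrightarrow> E s i j ts v)"
definition J6 :: "nat \<Rightarrow> nat set \<Rightarrow> ('t,'v) gstate \<Rightarrow> bool" where
  "J6 n B s \<longleftrightarrow> (\<forall>p q j ts v w. p \<in> {1..n} - B \<longrightarrow> q \<in> {1..n} - B \<longrightarrow> v \<noteq> w \<longrightarrow>
       PP s p j ts v q \<longrightarrow> PP s q j ts w p \<longrightarrow> False)"

definition Inv :: "nat \<Rightarrow> nat set \<Rightarrow> ('t,'v) gstate \<Rightarrow> bool" where
  "Inv n B s \<longleftrightarrow> J1 s \<and> J2 B s \<and> J3 B s \<and> J4 B s \<and> J5 B s \<and> J6 n B s"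

lemma Inv_init: "init_state s \<Longrightarrow> Inv n B s"
  by (auto simp: Inv_def J1_def J2_def J3_def J4_def J5_def J6_def init_state_def Rdy_def PP_def)

lemma frame:
  assumes "locS s' = locS s" "\<And>k. k \<notin> B \<Longrightarrow> readyR s' k = readyR s k"
    "\<And>k. k \<notin> B \<Longrightarrow> echoR s' k = echoR s k" "histS s \<subseteq> histS s'"
    "J3 B s" "J4 B s" "J5 B s" "J6 n B s"
  shows "J3 B s' \<and> J4 B s' \<and> J5 B s' \<and> J6 n B s'"
proof -
  have R: "\<And>x j ts v. x \<notin> B \<Longrightarrow> Rdy s' x j ts v = Rdy s x j ts v" using assms(2) by (simp add: Rdy_def)
  have Ee: "\<And>x j ts v. x \<notin> B \<Longrightarrow> E s' x j ts v = E s x j ts v" using assms(3) by (simp add: E_def)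
  have P: "\<And>x j ts v q. x \<notin> B \<Longrightarrow> PP s' x j ts v q = PP s x j ts v q" using R assms(1) by (simp add: PP_def)
  show ?thesis
  proof (intro conjI)
    show "J3 B s'" using assms(5) R assms(1) unfolding J3_def by simp
    show "J4 B s'" using assms(4,6) assms(1) unfolding J4_def by auto
    show "J5 B s'" using assms(7) R Ee assms(1) unfolding J5_def by simp
    show "J6 n B s'" using assms(8) P unfolding J6_def by simp
  qed
qed

lemma Inv_bstep: assumes "bstep B b s s'" "Inv n B s" "b \<in> B" shows "Inv n B s'"
  using assms(1)
proof (cases rule: bstep.cases)
  case (b_send X)
  let ?s' = "s\<lparr>sendR := (sendR s)(b := X), histS := histS s \<union> set_option X\<rparr>"
  have "J3 B ?s' \<and> J4 B ?s' \<and> J5 B ?s' \<and> J6 n B ?s'"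
    using assms by (intro frame[of ?s' s]) (auto simp: Inv_def)
  moreover have "J1 ?s'" using assms by (auto simp: Inv_def J1_def)
  moreover have "J2 B ?s'" using assms b_send by (auto simp: Inv_def J2_def parts_Un forge_free_def)
  ultimately show ?thesis using b_send by (simp add: Inv_def)
next
  case (b_echo X)
  let ?s' = "s\<lparr>echoR := (echoR s)(b := X), histS := histS s \<union> X\<rparr>"
  have "J3 B ?s' \<and> J4 B ?s' \<and> J5 B ?s' \<and> J6 n B ?s'"
    using assms by (intro frame[of ?s' s]) (auto simp: Inv_def)
  moreover have "J1 ?s'" using assms by (auto simp: Inv_def J1_def)
  moreover have "J2 B ?s'" using assms b_echo by (auto simp: Inv_def J2_def parts_Un forge_free_def)
  ultimately show ?thesis using b_echo by (simp add: Inv_def)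
next
  case (b_ready X)
  let ?s' = "s\<lparr>readyR := (readyR s)(b := X), histS := histS s \<union> X\<rparr>"
  have "J3 B ?s' \<and> J4 B ?s' \<and> J5 B ?s' \<and> J6 n B ?s'"
    using assms by (intro frame[of ?s' s]) (auto simp: Inv_def)
  moreover have "J1 ?s'" using assms by (auto simp: Inv_def J1_def)
  moreover have "J2 B ?s'" using assms b_ready by (auto simp: Inv_def J2_def parts_Un forge_free_def)
  ultimately show ?thesis using b_ready by (simp add: Inv_def)
next
  case (b_deliv X)
  let ?s' = "s\<lparr>delivR := (delivR s)(b := X), histS := histS s \<union> X\<rparr>"
  have "J3 B ?s' \<and> J4 B ?s' \<and> J5 B ?s' \<and> J6 n B ?s'"
    using assms by (intro frame[of ?s' s]) (auto simp: Inv_def)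
  moreover have "J1 ?s'" using assms by (auto simp: Inv_def J1_def)
  moreover have "J2 B ?s'" using assms b_deliv by (auto simp: Inv_def J2_def parts_Un forge_free_def)
  ultimately show ?thesis using b_deliv by (simp add: Inv_def)
qed



lemma J1_cstep: "cstep n f i s s' \<Longrightarrow> Inv n B s \<Longrightarrow> i \<in> {1..n} - B \<Longrightarrow> J1 s'"
  by (induction rule: cstep.induct) (auto simp: Inv_def J1_def J2_def J3_def J4_def J5_def setloc_def Rdy_def E_def)


lemma J2_cstep: "cstep n f i s s' \<Longrightarrow> Inv n B s \<Longrightarrow> i \<in> {1..n} - B \<Longrightarrow> J2 B s'"
proof (induction rule: cstep.induct)
  case (bc_write s i ts v)
  then show ?case using parts_Un[of "{MSig i (MData ts v)}" "histS s", simplified]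
    by (simp add: Inv_def J2_def setloc_def)
next
  case (wr_echo s i j ts v)
  then show ?case using parts_Un[of "{MSig i (MSig j (MData ts v))}" "histS s", simplified]
    by (simp add: Inv_def J2_def setloc_def)
next
  case (wr_ready s i j ts v)
  then show ?case using parts_Un[of "{MSig i (MReady (MSig j (MData ts v)))}" "histS s", simplified]
    by (auto simp add: Inv_def J2_def setloc_def)
next
  case (wr_deliv s i j ts v S e)
  then show ?case using parts_Un[of "{e}" "histS s", simplified]
    by (auto simp add: Inv_def J2_def J3_def Rdy_def setloc_def)
next
  case (dwr s i e)
  then have "e \<in> histS s" by (auto simp: Inv_def J4_def)
  then show ?case using dwr by (simp add: Inv_def J2_def setloc_def insert_absorb)
qed (simp_all add: Inv_def J2_def setloc_def)


lemma J3_cstep: "cstep n f i s s' \<Longrightarrow> Inv n B s \<Longrightarrow> i \<in> {1..n} - B \<Longrightarrow> J3 B s'"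
  by (induction rule: cstep.induct) (auto simp: Inv_def J1_def J3_def J4_def J5_def setloc_def Rdy_def E_def)


lemma J4_cstep: "cstep n f i s s' \<Longrightarrow> Inv n B s \<Longrightarrow> i \<in> {1..n} - B \<Longrightarrow> J4 B s'"
  by (induction rule: cstep.induct) (auto simp: Inv_def J1_def J3_def J4_def J5_def setloc_def Rdy_def E_def)


lemma J5_cstep: "cstep n f i s s' \<Longrightarrow> Inv n B s \<Longrightarrow> i \<in> {1..n} - B \<Longrightarrow> J5 B s'"
  by (induction rule: cstep.induct) (auto simp: Inv_def J1_def J3_def J4_def J5_def setloc_def Rdy_def E_def)


lemma PP_step: "cstep n f i s s' \<Longrightarrow> PP s' x j ts v q \<Longrightarrow> q \<le> n \<Longrightarrow> 1 \<le> q \<Longrightarrow>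
   PP s x j ts v q \<or> (x = i \<and> lpc (locS s i) = RChk1 j ts v q False \<and> \<not> conflict_in (echoR s q) q j ts v)"
proof (induction rule: cstep.induct)
  case (chk1_rd s i j' ts' v' k c)
  then show ?case
    by (auto simp: PP_def Rdy_def setloc_def less_Suc_eq split: if_splits)
next
  case (chk1_end_ok s i j' ts' v' k)
  then show ?case
    by (auto simp: PP_def Rdy_def setloc_def split: if_splits)
qed (auto simp: PP_def Rdy_def setloc_def split: if_splits)

lemma PP_E: "J5 B s \<Longrightarrow> x \<notin> B \<Longrightarrow> PP s x j ts v q \<Longrightarrow> E s x j ts v"
  unfolding J5_def PP_def by force

lemma J6_cstep: assumes "cstep n f i s s'" "Inv n B s" "i \<in> {1..n} - B" shows "J6 n B s'"
  unfolding J6_def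
proof (intro allI impI)
  fix p q j ts v w
  assume p: "p \<in> {1..n} - B" and q: "q \<in> {1..n} - B" and vw: "v \<noteq> w"
    and P1: "PP s' p j ts v q" and P2: "PP s' q j ts w p"
  have J5: "J5 B s" and J6: "J6 n B s" using assms(2) by (auto simp: Inv_def)
  have A: "PP s p j ts v q \<or> (p = i \<and> lpc (locS s i) = RChk1 j ts v q False \<and> \<not> conflict_in (echoR s q) q j ts v)"
    using PP_step[OF assms(1) P1] q by auto
  have B: "PP s q j ts w p \<or> (q = i \<and> lpc (locS s i) = RChk1 j ts w p False \<and> \<not> conflict_in (echoR s p) p j ts w)"
    using PP_step[OF assms(1) P2] p by auto
  show False
  proof (cases "PP s p j ts v q")
    case True
    note T = True
    show ?thesis
    proof (cases "PP s q j ts w p")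
      case True then show ?thesis using T J6 p q vw unfolding J6_def by blast
    next
      case False
      then have "\<not> conflict_in (echoR s p) p j ts w" using B by auto
      moreover have "E s p j ts v" using PP_E[OF J5 _ T] p by auto
      ultimately show ?thesis using vw by (auto simp: conflict_in_def E_def)
    qed
  next
    case False
    then have a: "p = i \<and> lpc (locS s i) = RChk1 j ts v q False \<and> \<not> conflict_in (echoR s q) q j ts v" using A by auto
    show ?thesis
    proof (cases "PP s q j ts w p")
      case True
      have "E s q j ts w" using PP_E[OF J5 _ True] q by auto
      then show ?thesis using a vw by (auto simp: conflict_in_def E_def)
    next
      case False
      then show ?thesis using a B vw by auto
    qed
  qed
qed



lemma Inv_reach: assumes "reach n f B s" "B \<subseteq> {1..n}" shows "Inv n B s"
  using assms(1)
proof (induction rule: reach.induct)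
  case (init s) then show ?case by (rule Inv_init)
next
  case (stp s s')
  from stp.hyps(2) show ?case unfolding step_def
  proof
    assume "\<exists>i \<in> {1..n} - B. cstep n f i s s'"
    then obtain i where i: "i \<in> {1..n} - B" "cstep n f i s s'" by blast
    show ?thesis unfolding Inv_def
      using J1_cstep[OF i(2) stp.IH i(1)] J2_cstep[OF i(2) stp.IH i(1)] J3_cstep[OF i(2) stp.IH i(1)]
        J4_cstep[OF i(2) stp.IH i(1)] J5_cstep[OF i(2) stp.IH i(1)] J6_cstep[OF i(2) stp.IH i(1)] by simp
  next
    assume "\<exists>b \<in> B. bstep B b s s'"
    then obtain b where "b \<in> B" "bstep B b s s'" by blast
    then show ?thesis using Inv_bstep stp.IH by blast
  qed
qed

lemma I1:
  assumes inv: "Inv n B s" and B: "B \<subseteq> {1..n}" "card B \<le> f"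
    and c: "is_cert n f m \<sigma>" and d: "MDeliv m \<sigma> \<in> delivR s j"
  shows "\<exists>k \<in> {1..n} - B. MSig k (MReady m) \<in> readyR s k"
proof -
  obtain S where S: "fset S \<subseteq> {1..n}" "f + 1 \<le> fcard S" "\<sigma> = (\<lambda>l. MSig l (MReady m)) |`| S"
    using c unfolding is_cert_def by blast
  have "\<not> fset S \<subseteq> B"
  proof
    assume "fset S \<subseteq> B"
    then have "card (fset S) \<le> card B" using B(1) by (intro card_mono) (auto intro: finite_subset)
    then show False using S(2) B(2) by (simp add: fcard.rep_eq)
  qed
  then obtain x where x: "x |\<in>| S" "x \<notin> B" by auto
  have "MDeliv m \<sigma> \<in> histS s" using inv d by (auto simp: Inv_def J1_def)
  then have "MDeliv m \<sigma> \<in> parts (histS s)" by (rule parts.inj)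
  moreover have "MSig x (MReady m) |\<in>| \<sigma>" using x S(3) by auto
  ultimately have "MSig x (MReady m) \<in> parts (histS s)" by (rule parts.dl2)
  then have "MSig x (MReady m) \<in> readyR s x" using inv x(2) by (auto simp: Inv_def J2_def)
  then show ?thesis using x S(1) by auto
qed

theorem lemma6p3:
  fixes n f :: nat and B :: "nat set" and s :: "('t,'v) gstate"
  assumes "B \<subseteq> {1..n}" and "card B \<le> f" and "reach n f B s"
  shows
   "(\<forall>i j ts v \<sigma>. i \<in> {1..n} \<longrightarrow> j \<in> {1..n} \<longrightarrow>
        is_cert n f (MSig i (MData ts v)) \<sigma> \<longrightarrow>
        MDeliv (MSig i (MData ts v)) \<sigma> \<in> delivR s j \<longrightarrow>
        (\<exists>k \<in> {1..n} - B. MSig k (MReady (MSig i (MData ts v))) \<in> readyR s k))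
  \<and> (\<forall>i j ts v. i \<in> {1..n} \<longrightarrow> j \<in> {1..n} - B \<longrightarrow>
        MSig j (MReady (MSig i (MData ts v))) \<in> readyR s j \<longrightarrow>
        MSig j (MSig i (MData ts v)) \<in> echoR s j)
  \<and> (\<forall>i j j' ts v w. i \<in> {1..n} \<longrightarrow> j \<in> {1..n} - B \<longrightarrow> j' \<in> {1..n} - B \<longrightarrow>
        MSig j (MReady (MSig i (MData ts v))) \<in> readyR s j \<longrightarrow>
        MSig j' (MReady (MSig i (MData ts w))) \<in> readyR s j' \<longrightarrow> v = w)
  \<and> (\<forall>i j j' ts v w \<sigma> \<sigma>'. i \<in> {1..n} \<longrightarrow> j \<in> {1..n} - B \<longrightarrow> j' \<in> {1..n} - B \<longrightarrow>
        is_cert n f (MSig i (MData ts v)) \<sigma> \<longrightarrow> is_cert n f (MSig i (MData ts w)) \<sigma>' \<longrightarrow>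
        MDeliv (MSig i (MData ts v)) \<sigma> \<in> delivR s j \<longrightarrow>
        MDeliv (MSig i (MData ts w)) \<sigma>' \<in> delivR s j' \<longrightarrow> v = w)"
proof -
  have inv: "Inv n B s" using Inv_reach assms(3,1) by blast
  have P1: "\<exists>k \<in> {1..n} - B. MSig k (MReady m) \<in> readyR s k"
    if "is_cert n f m \<sigma>" "MDeliv m \<sigma> \<in> delivR s j" for m \<sigma> j
    using I1[OF inv assms(1,2) that] .
  have P2: "MSig j (MSig i (MData ts v)) \<in> echoR s j"
    if "j \<notin> B" "MSig j (MReady (MSig i (MData ts v))) \<in> readyR s j" for i j ts v
    using inv that unfolding Inv_def J5_def Rdy_def E_def by blast
  have P3: "v = w" if "j \<in> {1..n} - B" "j' \<in> {1..n} - B"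
     "MSig j (MReady (MSig i (MData ts v))) \<in> readyR s j"
     "MSig j' (MReady (MSig i (MData ts w))) \<in> readyR s j'" for i j j' ts v w
  proof (rule ccontr)
    assume "v \<noteq> w"
    moreover have "PP s j i ts v j'" "PP s j' i ts w j" using that by (auto simp: PP_def Rdy_def)
    ultimately show False using inv that(1,2) unfolding Inv_def J6_def by blast
  qed
  show ?thesis
  proof (intro conjI allI impI)
    show "\<exists>k \<in> {1..n} - B. MSig k (MReady (MSig i (MData ts v))) \<in> readyR s k"
      if "is_cert n f (MSig i (MData ts v)) \<sigma>" "MDeliv (MSig i (MData ts v)) \<sigma> \<in> delivR s j" for i j ts v \<sigma>
      using P1 that by blast
  next
    fix i j j' ts v w
    assume "i \<in> {1..n}" "j \<in> {1..n} - B" "j' \<in> {1..n} - B"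
      "MSig j (MReady (MSig i (MData ts v))) \<in> readyR s j"
      "MSig j' (MReady (MSig i (MData ts w))) \<in> readyR s j'"
    then show "v = w" using P3 by blast
  next
    fix i j j' ts v w \<sigma> \<sigma>'
    assume a: "is_cert n f (MSig i (MData ts v)) \<sigma>" "is_cert n f (MSig i (MData ts w)) \<sigma>'"
        "MDeliv (MSig i (MData ts v)) \<sigma> \<in> delivR s j"
        "MDeliv (MSig i (MData ts w)) \<sigma>' \<in> delivR s j'"
    obtain k where "k \<in> {1..n} - B" "MSig k (MReady (MSig i (MData ts v))) \<in> readyR s k"
      using P1[OF a(1,3)] by blast
    moreover obtain k' where "k' \<in> {1..n} - B" "MSig k' (MReady (MSig i (MData ts w))) \<in> readyR s k'"
      using P1[OF a(2,4)] by blast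
    ultimately show "v = w" using P3 by blast
  qed (auto dest: P2)
qed

end
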